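(* Let $m\ge1$, let $k_1,k_2\ge0$ be integers and $r_1,r_2>0$ with $r_1^2+r_2^2=1$. Let $F_1:\mathbb{R}^{m+1}\to\mathbb{R}^{n_1+1}$ and $F_2:\mathbb{R}^{m+1}\to\mathbb{R}^{n_2+1}$ be forms of degrees $k_1$, $k_2$ with $|F_i(\bar x)|^2=r_i^2|\bar x|^{2k_i}$, restricting to $\varphi_1:\mathbb{S}^m\to\mathbb{S}^{n_1}(r_1)$ and $\varphi_2:\mathbb{S}^m\to\mathbb{S}^{n_2}(r_2)$, and let $\varphi=\iota\circ(\varphi_1,\varphi_2):\mathbb{S}^m\to\mathbb{S}^{n_1+n_2+1}$, where $\iota$ is the canonical inclusion of $\mathbb{S}^{n_1}(r_1)\times\mathbb{S}^{n_2}(r_2)$ into $\mathbb{S}^{n_1+n_2+1}$. If $\Delta^0F_1=0$ and $\Delta^0F_2=0$, then $\varphi$ is harmonic if and only if $k_1=k_2$.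
   Context: A form of degree $k$ is a map all of whose components are homogeneous polynomials of degree $k$. $\Delta^0=-\sum_i\partial^2/\partial(x^i)^2$ on $\mathbb{R}^{m+1}$, applied componentwise. $\mathbb{S}^n(r)$ is the sphere of radius $r$ centred at $0$, $\mathbb{S}^m=\mathbb{S}^m(1)$. Harmonic means vanishing tension field $\tau(\varphi)=\operatorname{trace}\nabla d\varphi$. *)

theory Defs
  imports "HOL-Analysis.Analysis"
begin

definition multi_idx :: "nat \<Rightarrow> ('m::finite \<Rightarrow> nat) set" where
  "multi_idx k = {\<alpha>. sum \<alpha> UNIV = k}"

definition is_form :: "nat \<Rightarrow> (real^'m::finite \<Rightarrow> real^'n::finite) \<Rightarrow> bool" where
  "is_form k F \<longleftrightarrow> (\<forall>j. \<exists>c :: ('m \<Rightarrow> nat) \<Rightarrow> real.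
      \<forall>x. F x $ j = (\<Sum>\<alpha>\<in>multi_idx k. c \<alpha> * (\<Prod>i\<in>UNIV. (x $ i) ^ (\<alpha> i))))"

definition partial2 :: "(real^'m::finite \<Rightarrow> real) \<Rightarrow> 'm \<Rightarrow> real^'m \<Rightarrow> real" where
  "partial2 f i x = deriv (deriv (\<lambda>t. f (x + t *\<^sub>R axis i 1))) 0"

definition Delta0 :: "(real^'m::finite \<Rightarrow> real^'n::finite) \<Rightarrow> real^'m \<Rightarrow> real^'n" where
  "Delta0 F x = (\<chi> j. - (\<Sum>i\<in>UNIV. partial2 (\<lambda>y. F y $ j) i x))"

definition trace_hess :: "(real^'m::finite \<Rightarrow> 'b::euclidean_space) \<Rightarrow> real^'m \<Rightarrow> 'b" where
  "trace_hess \<Phi> x = (\<Sum>b\<in>Basis. (\<Sum>i\<in>UNIV. partial2 (\<lambda>y. \<Phi> y \<bullet> b) i x) *\<^sub>R b)"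

text \<open>Tension field of a map phi from the unit sphere S^m (in R^{m+1} = real^'m) into the unit
  sphere of 'b. The Laplace-Beltrami operator of S^m (applied componentwise, i.e. trace of
  nabla d phi regarded as a map into the ambient space) is computed as the Euclidean Laplacian of
  the degree-0 homogeneous extension y |-> phi (y / |y|); the tension field is its
  projection onto the tangent space of the target sphere at phi x.\<close>
definition tension :: "(real^'m::finite \<Rightarrow> 'b::euclidean_space) \<Rightarrow> real^'m \<Rightarrow> 'b" where
  "tension \<phi> x = (let L = trace_hess (\<lambda>y. \<phi> (y /\<^sub>R norm y)) x in L - (L \<bullet> \<phi> x) *\<^sub>R \<phi> x)"

definition harmonic_sphere_map :: "(real^'m::finite \<Rightarrow> 'b::euclidean_space) \<Rightarrow> bool" where
  "harmonic_sphere_map \<phi> \<longleftrightarrow> (\<forall>x \<in> sphere 0 1. tension \<phi> x = 0)"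

end

theory Submission
  imports Defs "HOL-Computational_Algebra.Polynomial"
begin


lemma form_homog:
  fixes f :: "real^'m::finite \<Rightarrow> real"
  assumes H: "\<forall>y. f y = (\<Sum>\<alpha>\<in>multi_idx k. c \<alpha> * (\<Prod>i\<in>UNIV. (y $ i) ^ (\<alpha> i)))"
  shows "f (s *\<^sub>R y) = s ^ k * f y"
proof -
  have *: "(\<Prod>i\<in>UNIV. ((s *\<^sub>R y) $ i) ^ (\<alpha> i)) = s^k * (\<Prod>i\<in>UNIV. (y $ i) ^ (\<alpha> i))"
    if "\<alpha> \<in> multi_idx k" for \<alpha>
  proof -
    have "(\<Prod>i\<in>UNIV. ((s *\<^sub>R y) $ i) ^ (\<alpha> i)) = (\<Prod>i\<in>UNIV. s ^ \<alpha> i * (y$i)^\<alpha> i)"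
      by (simp add: power_mult_distrib)
    also have "\<dots> = (\<Prod>i\<in>UNIV. s ^ \<alpha> i) * (\<Prod>i\<in>UNIV. (y$i)^\<alpha> i)" by (rule prod.distrib)
    also have "(\<Prod>i\<in>UNIV. s ^ \<alpha> i) = s ^ k" using that unfolding multi_idx_def by (metis mem_Collect_eq power_sum)
    finally show ?thesis .
  qed
  have "f (s *\<^sub>R y) = (\<Sum>\<alpha>\<in>multi_idx k. c \<alpha> * (\<Prod>i\<in>UNIV. ((s *\<^sub>R y) $ i) ^ (\<alpha> i)))"
    using H by blast
  also have "\<dots> = (\<Sum>\<alpha>\<in>multi_idx k. c \<alpha> * (s^k * (\<Prod>i\<in>UNIV. (y $ i) ^ (\<alpha> i))))"
    by (intro sum.cong refl) (simp only: *)
  also have "\<dots> = s ^ k * f y" using H by (simp add: sum_distrib_left mult_ac)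
  finally show ?thesis .
qed

lemma form_line_poly:
  fixes f :: "real^'m::finite \<Rightarrow> real"
  assumes H: "\<forall>y. f y = (\<Sum>\<alpha>\<in>multi_idx k. c \<alpha> * (\<Prod>i\<in>UNIV. (y $ i) ^ (\<alpha> i)))"
  shows "\<exists>p. \<forall>t. f (x + t *\<^sub>R v) = poly p t"
proof (intro exI allI)
  fix t
  show "f (x + t *\<^sub>R v) = poly (\<Sum>\<alpha>\<in>multi_idx k. smult (c \<alpha>) (\<Prod>i\<in>UNIV. [:x$i, v$i:] ^ \<alpha> i)) t"
    using H by (simp add: poly_sum poly_prod mult_ac)
qed

lemma form_differentiable:
  fixes f :: "real^'m::finite \<Rightarrow> real"
  assumes H: "\<forall>y. f y = (\<Sum>\<alpha>\<in>multi_idx k. c \<alpha> * (\<Prod>i\<in>UNIV. (y $ i) ^ (\<alpha> i)))"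
  shows "f differentiable (at x)"
proof -
  have fe: "f = (\<lambda>y. \<Sum>\<alpha>\<in>multi_idx k. c \<alpha> * (\<Prod>i\<in>UNIV. (y $ i) ^ (\<alpha> i)))"
    using H by auto
  have mon: "(\<lambda>y. \<Prod>i\<in>UNIV. (y $ i) ^ (\<alpha> i)) differentiable (at x)" for \<alpha> :: "'m \<Rightarrow> nat"
  proof -
    have "\<forall>i. \<exists>D. ((\<lambda>y::real^'m. (y $ i) ^ (\<alpha> i)) has_derivative D) (at x)"
    proof
      fix i
      have "((\<lambda>y::real^'m. y $ i) has_derivative (\<lambda>y. y $ i)) (at x)"
        by (rule bounded_linear_imp_has_derivative[OF bounded_linear_vec_nth])
      from has_derivative_power[OF this, of "\<alpha> i"] show "\<exists>D. ((\<lambda>y::real^'m. (y $ i) ^ (\<alpha> i)) has_derivative D) (at x)" by blast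
    qed
    then obtain D where "\<forall>i. ((\<lambda>y::real^'m. (y $ i) ^ (\<alpha> i)) has_derivative D i) (at x)"
      by metis
    then show ?thesis unfolding differentiable_def
      using has_derivative_prod[of UNIV "\<lambda>i y. (y $ i) ^ (\<alpha> i)" D x UNIV] by blast
  qed
  show ?thesis
  proof (cases "finite (multi_idx k :: ('m \<Rightarrow> nat) set)")
    case True
    show ?thesis unfolding fe
      by (rule differentiable_sum[OF True]) (auto intro!: differentiable_mult mon)
  next
    case False
    then show ?thesis unfolding fe by simp
  qed
qed

lemma dir_deriv:
  fixes f :: "real^'m::finite \<Rightarrow> real"
  assumes "(f has_derivative D) (at x)"
  shows "((\<lambda>t. f (x + t *\<^sub>R v)) has_real_derivative D v) (at 0)"
proof -
  have l: "((\<lambda>t::real. x + t *\<^sub>R v) has_derivative (\<lambda>t. t *\<^sub>R v)) (at 0)"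
    by (auto intro!: derivative_eq_intros)
  have "(f has_derivative D) (at ((\<lambda>t::real. x + t *\<^sub>R v) 0))" using assms by simp
  from has_derivative_compose[OF l this]
  have "((\<lambda>t. f (x + t *\<^sub>R v)) has_derivative (\<lambda>t. D (t *\<^sub>R v))) (at 0)" by (simp add: o_def)
  moreover have "(\<lambda>t. D (t *\<^sub>R v)) = (*) (D v)"
    using has_derivative_linear[OF assms] by (auto simp: linear_scale)
  ultimately show ?thesis unfolding has_field_derivative_def by simp
qed

lemma form_euler:
  fixes f :: "real^'m::finite \<Rightarrow> real"
  assumes H: "\<forall>y. f y = (\<Sum>\<alpha>\<in>multi_idx k. c \<alpha> * (\<Prod>i\<in>UNIV. (y $ i) ^ (\<alpha> i)))"
  shows "(\<Sum>l\<in>UNIV. x$l * deriv (\<lambda>t. f (x + t *\<^sub>R axis l 1)) 0) = real k * f x"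
proof -
  obtain D where D: "(f has_derivative D) (at x)"
    using form_differentiable[OF H] unfolding differentiable_def by blast
  have lin: "linear D" using has_derivative_linear[OF D] .
  have d1: "deriv (\<lambda>t. f (x + t *\<^sub>R axis l 1)) 0 = D (axis l 1)" for l
    by (rule DERIV_imp_deriv[OF dir_deriv[OF D]])
  have "D x = D (\<Sum>l\<in>UNIV. x$l *\<^sub>R axis l 1)"
    using basis_expansion[of x] by (simp add: scalar_mult_eq_scaleR)
  also have "\<dots> = (\<Sum>l\<in>UNIV. x$l * D (axis l 1))"
    by (simp add: linear_sum[OF lin] linear_scale[OF lin])
  finally have Dx: "D x = (\<Sum>l\<in>UNIV. x$l * deriv (\<lambda>t. f (x + t *\<^sub>R axis l 1)) 0)"
    by (simp add: d1)
  have e: "(\<lambda>t. f (x + t *\<^sub>R x)) = (\<lambda>t. (1 + t) ^ k * f x)"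
  proof
    fix t
    have "x + t *\<^sub>R x = (1 + t) *\<^sub>R x" by (simp add: algebra_simps)
    then show "f (x + t *\<^sub>R x) = (1 + t) ^ k * f x" using form_homog[OF H] by simp
  qed
  have "((\<lambda>t. (1 + t) ^ k * f x) has_real_derivative real k * f x) (at 0)"
    by (auto intro!: derivative_eq_intros)
  moreover have "((\<lambda>t. (1 + t) ^ k * f x) has_real_derivative D x) (at 0)"
    using dir_deriv[OF D, of x] e by simp
  ultimately have "D x = real k * f x" using DERIV_unique by blast
  then show ?thesis using Dx by simp
qed



lemma dq_powr:
  fixes a c t :: real
  assumes "1 + 2*a*t + t^2 > 0"
  shows "((\<lambda>t. (1 + 2*a*t + t^2) powr c) has_real_derivative c * (1 + 2*a*t + t^2) powr (c - 1) * (2*a + 2*t)) (at t)"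
  using assms by (auto intro!: derivative_eq_intros simp: algebra_simps)

lemma powr_norm_eq:
  fixes n :: real
  assumes "n > 0"
  shows "inverse n ^ k = (n^2) powr (-(real k)/2)"
proof -
  have "(n^2) powr (-(real k)/2) = (n powr 2) powr (-(real k)/2)"
    using assms by (simp add: powr_realpow)
  also have "\<dots> = n powr (-(real k))" by (simp add: powr_powr)
  also have "\<dots> = inverse n ^ k" using assms by (simp add: powr_minus powr_realpow power_inverse)
  finally show ?thesis by simp
qed



lemma sphere_partial2:
  fixes f :: "real^'m::finite \<Rightarrow> real"
  assumes H: "\<forall>y. f y = (\<Sum>\<alpha>\<in>multi_idx k. c \<alpha> * (\<Prod>i\<in>UNIV. (y $ i) ^ (\<alpha> i)))"
    and nx: "norm x = 1"
  shows "partial2 (\<lambda>y. f (y /\<^sub>R norm y)) l x =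
     (real k * (real k + 2) * (x$l)^2 - real k) * f x
     - 2 * real k * x$l * deriv (\<lambda>t. f (x + t *\<^sub>R axis l 1)) 0 + partial2 f l x"
proof -
  define e :: "real^'m" where "e = axis l 1"
  define a where "a = x$l"
  obtain p where p: "\<forall>t. f (x + t *\<^sub>R e) = poly p t"
    using form_line_poly[OF H] by blast
  define q where "q t = 1 + 2*a*t + t^2" for t
  define ck where "ck = -(real k)/2"
  define G where "G t = q t powr ck * poly p t" for t
  define G1 where "G1 t = ck * q t powr (ck - 1) * (2*a + 2*t) * poly p t + q t powr ck * poly (pderiv p) t" for t
  have nq: "(norm (x + t *\<^sub>R e))^2 = q t" for t
  proof -
    have "(norm (x + t *\<^sub>R e))^2 = (x + t *\<^sub>R e) \<bullet> (x + t *\<^sub>R e)" by (simp add: power2_norm_eq_inner)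
    also have "\<dots> = x \<bullet> x + 2 * t * (x \<bullet> e) + t^2 * (e \<bullet> e)"
      by (simp add: inner_add_left inner_add_right inner_commute power2_eq_square algebra_simps)
    also have "x \<bullet> x = 1" using nx by (simp add: power2_norm_eq_inner[symmetric])
    also have "x \<bullet> e = a" by (simp add: e_def a_def cart_eq_inner_axis)
    also have "e \<bullet> e = 1" by (simp add: e_def)
    finally show ?thesis by (simp add: q_def)
  qed
  have eqG: "f ((x + t *\<^sub>R e) /\<^sub>R norm (x + t *\<^sub>R e)) = G t" if "q t > 0" for t
  proof -
    have pos: "norm (x + t *\<^sub>R e) > 0" using nq[of t] that by (metis norm_zero power2_eq_square mult_zero_left less_irrefl norm_ge_zero order_le_less)
    have "f ((x + t *\<^sub>R e) /\<^sub>R norm (x + t *\<^sub>R e)) = inverse (norm (x + t *\<^sub>R e)) ^ k * f (x + t *\<^sub>R e)"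
      using form_homog[OF H] by simp
    also have "inverse (norm (x + t *\<^sub>R e)) ^ k = q t powr ck"
      using powr_norm_eq[OF pos, of k] nq[of t] by (simp add: ck_def)
    finally show ?thesis using p by (simp add: G_def)
  qed
  have q0: "q 0 = 1" by (simp add: q_def)
  have evq: "eventually (\<lambda>t. q t > 0) (nhds 0)"
  proof -
    have "isCont q 0" unfolding q_def by (intro continuous_intros)
    then have "(q \<longlongrightarrow> q 0) (at 0)" by (simp add: isCont_def)
    then have "eventually (\<lambda>t. q t > 0) (at 0)" using q0 by (intro order_tendstoD(1)) auto
    then show ?thesis using q0 by (simp add: eventually_nhds_conv_at)
  qed
  have dG: "(G has_real_derivative G1 t) (at t)" if "q t > 0" for t
  proof -
    have "((\<lambda>t. q t powr ck) has_real_derivative ck * q t powr (ck - 1) * (2*a + 2*t)) (at t)"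
      using dq_powr[of a t ck] that unfolding q_def by simp
    from DERIV_mult[OF this poly_DERIV[of p t]] show ?thesis
      unfolding G_def[abs_def] G1_def by (simp add: algebra_simps)
  qed
  have dG1: "(G1 has_real_derivative
      (ck * ((ck - 1) * (2*a) * (2*a) + 2)) * poly p 0 + 2 * (ck * (2*a)) * poly (pderiv p) 0
       + poly (pderiv (pderiv p)) 0) (at 0)"
  proof -
    have d1: "((\<lambda>t. q t powr (ck - 1)) has_real_derivative (ck - 1) * q 0 powr (ck - 1 - 1) * (2*a + 2*0)) (at 0)"
      using dq_powr[of a 0 "ck - 1"] unfolding q_def by simp
    have d0: "((\<lambda>t. q t powr ck) has_real_derivative ck * q 0 powr (ck - 1) * (2*a + 2*0)) (at 0)"
      using dq_powr[of a 0 "ck"] unfolding q_def by simp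
    have "(G1 has_real_derivative
       ck * ((ck - 1) * q 0 powr (ck - 1 - 1) * (2*a + 2*0) * (2*a + 2*0) * poly p 0
        + q 0 powr (ck - 1) * 2 * poly p 0 + q 0 powr (ck - 1) * (2*a + 2*0) * poly (pderiv p) 0)
       + (ck * q 0 powr (ck - 1) * (2*a + 2*0) * poly (pderiv p) 0 + q 0 powr ck * poly (pderiv (pderiv p)) 0)) (at 0)"
      unfolding G1_def[abs_def]
      by (rule derivative_eq_intros d1 d0 poly_DERIV refl | simp)+ (simp add: algebra_simps)
    then show ?thesis using q0 by (simp add: algebra_simps)
  qed
  let ?L = "\<lambda>t. f ((x + t *\<^sub>R e) /\<^sub>R norm (x + t *\<^sub>R e))"
  have evD: "eventually (\<lambda>s. deriv ?L s = G1 s) (nhds 0)"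
  proof -
    have "eventually (\<lambda>s. q s > 0 \<and> eventually (\<lambda>t. q t > 0) (nhds s)) (nhds 0)"
      using evq by (simp add: eventually_conj_iff eventually_eventually)
    then show ?thesis
    proof (rule eventually_mono)
      fix s assume s: "q s > 0 \<and> eventually (\<lambda>t. q t > 0) (nhds s)"
      have "eventually (\<lambda>t. ?L t = G t) (nhds s)"
        using s[THEN conjunct2] by (rule eventually_mono) (rule eqG)
      then have "deriv ?L s = deriv G s" by (rule deriv_cong_ev) simp
      also have "\<dots> = G1 s" using dG s by (intro DERIV_imp_deriv) auto
      finally show "deriv ?L s = G1 s" .
    qed
  qed
  have "partial2 (\<lambda>y. f (y /\<^sub>R norm y)) l x = deriv (deriv ?L) 0"
    by (simp add: partial2_def e_def)
  also have "\<dots> = deriv G1 0" by (rule deriv_cong_ev[OF evD]) simp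
  also have "\<dots> = (ck * ((ck - 1) * (2*a) * (2*a) + 2)) * poly p 0 + 2 * (ck * (2*a)) * poly (pderiv p) 0
       + poly (pderiv (pderiv p)) 0" by (rule DERIV_imp_deriv[OF dG1])
  finally have calc: "partial2 (\<lambda>y. f (y /\<^sub>R norm y)) l x = (ck * ((ck - 1) * (2*a) * (2*a) + 2)) * poly p 0 + 2 * (ck * (2*a)) * poly (pderiv p) 0
       + poly (pderiv (pderiv p)) 0" .
  have lp: "(\<lambda>t. f (x + t *\<^sub>R e)) = poly p" using p by auto
  have h0: "poly p 0 = f x" using p[rule_format, of 0] by simp
  have h1: "poly (pderiv p) 0 = deriv (\<lambda>t. f (x + t *\<^sub>R axis l 1)) 0"
    unfolding lp[unfolded e_def] by (rule DERIV_imp_deriv[OF poly_DERIV, symmetric])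
  have h2: "poly (pderiv (pderiv p)) 0 = partial2 f l x"
  proof -
    have dd: "deriv (poly p) = poly (pderiv p)" by (rule ext, rule DERIV_imp_deriv[OF poly_DERIV])
    show ?thesis unfolding partial2_def lp[unfolded e_def] dd
      by (rule DERIV_imp_deriv[OF poly_DERIV, symmetric])
  qed
  have ar: "ck * ((ck - 1) * (2*a) * (2*a) + 2) = real k * (real k + 2) * a^2 - real k"
    by (simp add: ck_def field_simps power2_eq_square)
  have ar2: "2 * (ck * (2*a)) = - (2 * real k * a)"
    by (simp add: ck_def)
  show ?thesis unfolding calc h0 h1 h2 a_def[symmetric] 
    by (simp add: ck_def field_simps power2_eq_square)
qed



lemma sphere_laplace:
  fixes f :: "real^'m::finite \<Rightarrow> real"
  assumes H: "\<forall>y. f y = (\<Sum>\<alpha>\<in>multi_idx k. c \<alpha> * (\<Prod>i\<in>UNIV. (y $ i) ^ (\<alpha> i)))"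
    and nx: "norm x = 1"
    and harm: "(\<Sum>i\<in>UNIV. partial2 f i x) = 0"
  shows "(\<Sum>l\<in>UNIV. partial2 (\<lambda>y. f (y /\<^sub>R norm y)) l x)
     = - (real k * (real k + real CARD('m) - 2)) * f x"
proof -
  define D where "D l = deriv (\<lambda>t. f (x + t *\<^sub>R axis l 1)) 0" for l
  have sq: "(\<Sum>l\<in>UNIV. (x$l)^2) = 1"
  proof -
    have "x \<bullet> x = 1" using nx by (simp add: power2_norm_eq_inner[symmetric])
    then show ?thesis by (simp add: inner_vec_def power2_eq_square)
  qed
  have eu: "(\<Sum>l\<in>UNIV. x$l * D l) = real k * f x"
    unfolding D_def by (rule form_euler[OF H])
  have "(\<Sum>l\<in>UNIV. partial2 (\<lambda>y. f (y /\<^sub>R norm y)) l x)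
     = (\<Sum>l\<in>UNIV. (real k * (real k + 2) * (x$l)^2 - real k) * f x) - (\<Sum>l\<in>UNIV. 2 * real k * (x$l * D l))
       + (\<Sum>l\<in>UNIV. partial2 f l x)"
    by (simp add: sphere_partial2[OF H nx] sum.distrib sum_subtractf D_def mult.assoc)
  also have "(\<Sum>l\<in>UNIV. (real k * (real k + 2) * (x$l)^2 - real k) * f x)
      = (real k * (real k + 2) * (\<Sum>l\<in>UNIV. (x$l)^2) - real k * real CARD('m)) * f x"
    by (subst sum_distrib_right[symmetric]) (simp add: sum_subtractf sum_distrib_left)
  also have "(\<Sum>l\<in>UNIV. 2 * real k * (x$l * D l)) = 2 * real k * (real k * f x)"
    by (simp add: sum_distrib_left[symmetric] eu)
  finally show ?thesis using harm sq by (simp add: algebra_simps)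
qed



lemma comp_laplace:
  fixes F :: "real^'m::finite \<Rightarrow> real^'a::finite"
  assumes F: "is_form k F" and harm: "\<forall>x. Delta0 F x = 0" and nx: "norm x = 1"
  shows "(\<Sum>i\<in>UNIV. partial2 (\<lambda>y. F (y /\<^sub>R norm y) $ j) i x)
     = - (real k * (real k + real CARD('m) - 2)) * (F x $ j)"
proof -
  obtain c where H: "\<forall>y. F y $ j = (\<Sum>\<alpha>\<in>multi_idx k. c \<alpha> * (\<Prod>i\<in>UNIV. (y $ i) ^ (\<alpha> i)))"
    using F unfolding is_form_def by blast
  have "Delta0 F x $ j = 0" using harm by simp
  then have h: "(\<Sum>i\<in>UNIV. partial2 (\<lambda>y. F y $ j) i x) = 0" by (simp add: Delta0_def)
  show ?thesis using sphere_laplace[of "\<lambda>y. F y $ j", OF H nx h] by simp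
qed

lemma trace_hess_pair:
  fixes F1 :: "real^'m::finite \<Rightarrow> real^'a::finite"
    and F2 :: "real^'m \<Rightarrow> real^'b::finite"
  assumes F1: "is_form k1 F1" and h1: "\<forall>x. Delta0 F1 x = 0"
    and F2: "is_form k2 F2" and h2: "\<forall>x. Delta0 F2 x = 0"
    and nx: "norm x = 1"
  shows "trace_hess (\<lambda>y. (F1 (y /\<^sub>R norm y), F2 (y /\<^sub>R norm y))) x
    = (- (real k1 * (real k1 + real CARD('m) - 2)) *\<^sub>R F1 x,
       - (real k2 * (real k2 + real CARD('m) - 2)) *\<^sub>R F2 x)"
    (is "_ = ?L")
proof -
  have c: "(\<Sum>i\<in>UNIV. partial2 (\<lambda>y. (F1 (y /\<^sub>R norm y), F2 (y /\<^sub>R norm y)) \<bullet> b) i x) = ?L \<bullet> b"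
    if b: "b \<in> Basis" for b
  proof -
    from b consider (l) j where "b = (axis j 1, 0)" | (r) j where "b = (0, axis j 1)"
      unfolding Basis_prod_def Basis_vec_def by auto
    then show ?thesis
    proof cases
      case l
      then show ?thesis
        using comp_laplace[OF F1 h1 nx, of j]
        by (simp add: cart_eq_inner_axis[symmetric])
    next
      case r
      then show ?thesis
        using comp_laplace[OF F2 h2 nx, of j]
        by (simp add: cart_eq_inner_axis[symmetric])
    qed
  qed
  have "trace_hess (\<lambda>y. (F1 (y /\<^sub>R norm y), F2 (y /\<^sub>R norm y))) x = (\<Sum>b\<in>Basis. (?L \<bullet> b) *\<^sub>R b)"
    unfolding trace_hess_def by (intro sum.cong refl) (simp add: c)
  also have "\<dots> = ?L" by (rule euclidean_representation)
  finally show ?thesis .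
qed


theorem mainTheorem4:
  fixes F1 :: "real^'m::finite \<Rightarrow> real^'a::finite"
    and F2 :: "real^'m \<Rightarrow> real^'b::finite"
    and k1 k2 :: nat and r1 r2 :: real
  assumes m: "CARD('m) \<ge> 2"
    and r: "r1 > 0" "r2 > 0" "r1\<^sup>2 + r2\<^sup>2 = 1"
    and F1: "is_form k1 F1" "\<forall>x. (norm (F1 x))\<^sup>2 = r1\<^sup>2 * norm x ^ (2 * k1)"
    and F2: "is_form k2 F2" "\<forall>x. (norm (F2 x))\<^sup>2 = r2\<^sup>2 * norm x ^ (2 * k2)"
    and harm1: "\<forall>x. Delta0 F1 x = 0"
    and harm2: "\<forall>x. Delta0 F2 x = 0"
  shows "harmonic_sphere_map (\<lambda>x. (F1 x, F2 x)) \<longleftrightarrow> k1 = k2"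
proof -
  define \<mu>1 where "\<mu>1 = real k1 * (real k1 + real CARD('m) - 2)"
  define \<mu>2 where "\<mu>2 = real k2 * (real k2 + real CARD('m) - 2)"
  have mu: "\<mu>1 = \<mu>2 \<longleftrightarrow> k1 = k2"
  proof
    assume "\<mu>1 = \<mu>2"
    then have "(real k2 - real k1) * (real k1 + real k2 + real CARD('m) - 2) = 0"
      unfolding \<mu>1_def \<mu>2_def by (simp add: algebra_simps)
    moreover have "real CARD('m) \<ge> 2" using m by simp
    ultimately have "real k2 = real k1 \<or> real k1 + real k2 + real CARD('m) - 2 = 0" by auto
    then show "k1 = k2" using \<open>real CARD('m) \<ge> 2\<close> by auto
  qed (simp add: \<mu>1_def \<mu>2_def)
  have key: "tension (\<lambda>x. (F1 x, F2 x)) x = 0 \<longleftrightarrow> k1 = k2" if nx: "norm x = 1" for x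
  proof -
    have n1: "F1 x \<bullet> F1 x = r1\<^sup>2" using F1(2) nx by (simp add: power2_norm_eq_inner[symmetric])
    have n2: "F2 x \<bullet> F2 x = r2\<^sup>2" using F2(2) nx by (simp add: power2_norm_eq_inner[symmetric])
    have th: "trace_hess (\<lambda>y. (F1 (y /\<^sub>R norm y), F2 (y /\<^sub>R norm y))) x = (- \<mu>1 *\<^sub>R F1 x, - \<mu>2 *\<^sub>R F2 x)"
      unfolding \<mu>1_def \<mu>2_def by (rule trace_hess_pair[OF F1(1) harm1 F2(1) harm2 nx])
    define c where "c = - \<mu>1 * r1\<^sup>2 - \<mu>2 * r2\<^sup>2"
    have Lphi: "(- \<mu>1 *\<^sub>R F1 x, - \<mu>2 *\<^sub>R F2 x) \<bullet> (F1 x, F2 x) = c"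
      by (simp add: n1 n2 c_def)
    have e1: "r1\<^sup>2 = 1 - r2\<^sup>2" using r(3) by simp
    have s1: "- \<mu>1 - c = (\<mu>2 - \<mu>1) * r2\<^sup>2"
      unfolding c_def e1 by (simp add: algebra_simps)
    have s2: "- \<mu>2 - c = (\<mu>1 - \<mu>2) * (1 - r2\<^sup>2)"
      unfolding c_def e1 by (simp add: algebra_simps)
    have t: "tension (\<lambda>x. (F1 x, F2 x)) x = (((\<mu>2 - \<mu>1) * r2\<^sup>2) *\<^sub>R F1 x, ((\<mu>1 - \<mu>2) * (1 - r2\<^sup>2)) *\<^sub>R F2 x)"
      unfolding tension_def Let_def th Lphi
      by (simp add: s1[symmetric] s2[symmetric] scaleR_diff_left)
    have F1nz: "F1 x \<noteq> 0" using n1 r(1) by auto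
    have F2nz: "F2 x \<noteq> 0" using n2 r(2) by auto
    have "tension (\<lambda>x. (F1 x, F2 x)) x = 0 \<longleftrightarrow> \<mu>1 = \<mu>2"
      unfolding t using F1nz F2nz r(1,2) e1[symmetric] by (auto simp: zero_prod_def)
    then show ?thesis using mu by simp
  qed
  show ?thesis
  proof
    assume "harmonic_sphere_map (\<lambda>x. (F1 x, F2 x))"
    then have "tension (\<lambda>x. (F1 x, F2 x)) (axis undefined 1 :: real^'m) = 0"
      unfolding harmonic_sphere_map_def by simp
    then show "k1 = k2" using key[of "axis undefined 1"] by simp
  next
    assume "k1 = k2"
    then show "harmonic_sphere_map (\<lambda>x. (F1 x, F2 x))"
      unfolding harmonic_sphere_map_def using key by simp
  qed
qed



end
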